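(* Let $M$ be a proper metric space and $X_1,\dots,X_n$ a coarsely transverse collection of half spaces in $M$. For $\sigma\in S_n$ put $A_0^\sigma=X_{\sigma_1}\cdots X_{\sigma_n}$ and $A_i^\sigma=X_{\sigma_i}^cX_{\sigma_{i+1}}\cdots X_{\sigma_n}$ ($i=1,\dots,n$), products of indicator functions. Then in $HX^n(M)$, $$[\mathbf 1\wedge X_1\wedge\dots\wedge X_n]=(-1)^n\sum_{\sigma\in S_n}\mathrm{sgn}(\sigma)\,[A_0^\sigma\wedge\dots\wedge A_n^\sigma].$$
   Context: Borel sets are identified with their indicator functions; $\mathbf 1$ is the constant function $1$. For $Y\subseteq M$, $Y_R=\{x:d(x,Y)\le R\}$. Borel sets $X_1,\dots,X_n$ form a coarsely transverse collection of half spaces if $\bigcap_i (X_i)_R\cap(X_i^c)_R$ is bounded for all $R\ge0$. Coarse cohomology: equip $M^{n+1}$ with the max metric, let $\Delta\subset M^{n+1}$ be the multi-diagonal and $\Delta_R$ its $R$-thickening. $CX^n(M)$ is the space of locally bounded Borel functions $\theta:M^{n+1}\to\mathbb{C}$ such that $\mathrm{supp}(\theta)\cap\Delta_R$ is bounded for every $R>0$, with differential $\delta\theta=\sum_{i=0}^{n+1}(-1)^i\pi_i^*\theta$ ($\pi_i:M^{n+2}\to M^{n+1}$ omits the $i$-th coordinate); $HX^n(M)$ is its cohomology (equivalently, that of the subcomplex of anti-symmetric cochains). For bounded Borel functions $f_0,\dots,f_n$, $f_0\wedge\dots\wedge f_n=\sum_{\sigma\in S_{n+1}}\mathrm{sgn}(\sigma)f_{\sigma_0}\otimes\dots\otimes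 f_{\sigma_n}$. Both sides' cochains are coarse cocycles under the hypothesis. *)

theory Defs
  imports "HOL-Analysis.Analysis" "HOL-Combinatorics.Permutations"
begin

text \<open>Tuples in M^(k+1) are represented as extensional functions on {..k}.\<close>

abbreviation tuples :: "nat \<Rightarrow> (nat \<Rightarrow> 'a) set" where
  "tuples k \<equiv> PiE {..k} (\<lambda>_. UNIV)"

text \<open>R-thickening Y_R = {x. d(x,Y) \<le> R} (empty for empty Y, as d(x,{}) = \<infinity>).\<close>
definition thick :: "real \<Rightarrow> 'a::metric_space set \<Rightarrow> 'a set" where
  "thick R Y = {x. Y \<noteq> {} \<and> infdist x Y \<le> R}"

definition coarsely_transverse :: "nat \<Rightarrow> (nat \<Rightarrow> 'a::metric_space set) \<Rightarrow> bool" where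
  "coarsely_transverse n X \<longleftrightarrow>
     (\<forall>i\<in>{1..n}. X i \<in> sets borel) \<and>
     (\<forall>R\<ge>0. bounded (\<Inter>i\<in>{1..n}. thick R (X i) \<inter> thick R (- X i)))"

definition bounded_tuples :: "nat \<Rightarrow> (nat \<Rightarrow> 'a::metric_space) set \<Rightarrow> bool" where
  "bounded_tuples k S \<longleftrightarrow> (\<exists>c r. \<forall>x\<in>S. \<forall>i\<le>k. dist c (x i) \<le> r)"

definition diag_dist :: "nat \<Rightarrow> (nat \<Rightarrow> 'a::metric_space) \<Rightarrow> real" where
  "diag_dist k x = (INF z. Max ((\<lambda>i. dist (x i) z) ` {..k}))"

definition diag_thick :: "nat \<Rightarrow> real \<Rightarrow> (nat \<Rightarrow> 'a::metric_space) set" where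
  "diag_thick k R = {x \<in> tuples k. diag_dist k x \<le> R}"

definition supp_cochain :: "nat \<Rightarrow> ((nat \<Rightarrow> 'a) \<Rightarrow> complex) \<Rightarrow> (nat \<Rightarrow> 'a) set" where
  "supp_cochain k \<theta> = {x \<in> tuples k. \<theta> x \<noteq> 0}"

definition CX :: "nat \<Rightarrow> ((nat \<Rightarrow> 'a::metric_space) \<Rightarrow> complex) set" where
  "CX k = {\<theta>.
     \<theta> \<in> borel_measurable (PiM {..k} (\<lambda>_. borel)) \<and>
     (\<forall>S. S \<subseteq> tuples k \<longrightarrow> bounded_tuples k S \<longrightarrow> (\<exists>K. \<forall>x\<in>S. norm (\<theta> x) \<le> K)) \<and>
     (\<forall>R>0. bounded_tuples k (supp_cochain k \<theta> \<inter> diag_thick k R))}"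

definition omit :: "nat \<Rightarrow> nat \<Rightarrow> (nat \<Rightarrow> 'a) \<Rightarrow> (nat \<Rightarrow> 'a)" where
  "omit k i x = restrict (\<lambda>j. if j < i then x j else x (Suc j)) {..k}"

definition cobound :: "nat \<Rightarrow> ((nat \<Rightarrow> 'a) \<Rightarrow> complex) \<Rightarrow> ((nat \<Rightarrow> 'a) \<Rightarrow> complex)" where
  "cobound k \<theta> = (\<lambda>x. \<Sum>i\<le>Suc k. (-1) ^ i * \<theta> (omit k i x))"

definition coarse_cocycle :: "nat \<Rightarrow> ((nat \<Rightarrow> 'a::metric_space) \<Rightarrow> complex) \<Rightarrow> bool" where
  "coarse_cocycle k \<theta> \<longleftrightarrow> \<theta> \<in> CX k \<and> (\<forall>x\<in>tuples (Suc k). cobound k \<theta> x = 0)"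

text \<open>Equality of cohomology classes [\<theta>1] = [\<theta>2] in HX^k(M) (CX^(-1) = 0).\<close>
definition HX_eq :: "nat \<Rightarrow> ((nat \<Rightarrow> 'a::metric_space) \<Rightarrow> complex) \<Rightarrow> ((nat \<Rightarrow> 'a) \<Rightarrow> complex) \<Rightarrow> bool" where
  "HX_eq k \<theta>1 \<theta>2 \<longleftrightarrow> coarse_cocycle k \<theta>1 \<and> coarse_cocycle k \<theta>2 \<and>
     (if k = 0 then (\<forall>x\<in>tuples k. \<theta>1 x = \<theta>2 x)
      else (\<exists>\<psi>\<in>CX (k - 1). \<forall>x\<in>tuples k. \<theta>1 x - \<theta>2 x = cobound (k - 1) \<psi> x))"

definition wedge :: "nat \<Rightarrow> (nat \<Rightarrow> 'a \<Rightarrow> complex) \<Rightarrow> ((nat \<Rightarrow> 'a) \<Rightarrow> complex)" where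
  "wedge k f = (\<lambda>x. \<Sum>\<sigma>\<in>{\<sigma>. \<sigma> permutes {..k}}. of_int (sign \<sigma>) * (\<Prod>j\<le>k. f (\<sigma> j) (x j)))"

definition ind :: "'a set \<Rightarrow> 'a \<Rightarrow> complex" where
  "ind Y = indicator Y"

definition A_fun :: "nat \<Rightarrow> (nat \<Rightarrow> 'a set) \<Rightarrow> (nat \<Rightarrow> nat) \<Rightarrow> nat \<Rightarrow> 'a \<Rightarrow> complex" where
  "A_fun n X \<sigma> i = (\<lambda>y. (if i = 0 then 1 else ind (- X (\<sigma> i)) y) * (\<Prod>j\<in>{i+1..n}. ind (X (\<sigma> j)) y))"

end

theory Submission
  imports Defs "Jordan_Normal_Form.Determinant"
begin


definition del :: "nat \<Rightarrow> (nat \<Rightarrow> 'v) \<Rightarrow> (nat \<Rightarrow> 'v)" where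
  "del i t = (\<lambda>m. if m < i then t m else t (Suc m))"

definition cb :: "nat \<Rightarrow> ((nat \<Rightarrow> 'v) \<Rightarrow> complex) \<Rightarrow> ((nat \<Rightarrow> 'v) \<Rightarrow> complex)" where
  "cb k \<omega> = (\<lambda>t. \<Sum>i\<le>Suc k. (-1)^i * \<omega> (del i t))"

lemma del_del: "i \<le> i' \<Longrightarrow> del i' (del i t) = del i (del (Suc i') t)"
  by (auto simp: del_def fun_eq_iff)

lemma m1_pow: "0 < m \<Longrightarrow> (-1::'a::ring_1)^m = - ((-1)^(m - 1))"
  by (cases m) auto

lemma cb_cb: "cb (Suc k) (cb k \<phi>) t = 0"
proof -
  let ?g = "\<lambda>(i,i'). (-1::complex)^(i+i') * \<phi> (del i' (del i t))"
  have eq: "cb (Suc k) (cb k \<phi>) t = (\<Sum>p\<in>{..Suc(Suc k)}\<times>{..Suc k}. ?g p)"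
    unfolding cb_def sum_distrib_left sum.cartesian_product by (intro sum.cong refl) (auto simp: power_add)
  define P1 where "P1 = {(i,i'). i \<le> i' \<and> i' \<le> Suc k}"
  define P2 where "P2 = {(i,i'). i' < i \<and> i \<le> Suc (Suc k)}"
  have U: "{..Suc(Suc k)}\<times>{..Suc k} = P1 \<union> P2" by (auto simp: P1_def P2_def)
  have f1: "finite P1" by (rule finite_subset[of _ "{..Suc(Suc k)}\<times>{..Suc k}"]) (auto simp: P1_def)
  have f2: "finite P2" by (rule finite_subset[of _ "{..Suc(Suc k)}\<times>{..Suc k}"]) (auto simp: P2_def)
  have d: "P1 \<inter> P2 = {}" by (auto simp: P1_def P2_def)
  have "sum ?g P2 = sum (\<lambda>p. - ?g p) P1"
    by (rule sum.reindex_bij_witness[where j="\<lambda>(a,b). (b, a - 1)" and i="\<lambda>(i,i'). (Suc i', i)"])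
       (auto simp: P1_def P2_def del_del m1_pow[of "b + a" for a b] add.commute)
  then have "sum ?g P2 = - sum ?g P1" by (simp add: sum_negf)
  then show ?thesis unfolding eq U using sum.union_disjoint[OF f1 f2 d, of ?g] by simp
qed



definition mixt :: "nat \<Rightarrow> nat \<Rightarrow> (nat \<Rightarrow> nat set) \<Rightarrow> (nat \<Rightarrow> nat set)" where
  "mixt N j t = (\<lambda>m. if m \<le> j then insert N (t m) else t (m - 1))"

definition prism :: "nat \<Rightarrow> nat \<Rightarrow> ((nat \<Rightarrow> nat set) \<Rightarrow> complex) \<Rightarrow> ((nat \<Rightarrow> nat set) \<Rightarrow> complex)" where
  "prism N k \<omega> = (\<lambda>t. \<Sum>j<k. (-1)^j * \<omega> (mixt N j t))"

definition Dt :: "nat \<Rightarrow> nat \<Rightarrow> (nat \<Rightarrow> nat set) \<Rightarrow> (nat \<Rightarrow> nat set)" where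
  "Dt N j t = (\<lambda>m. if m < j then insert N (t m) else t m)"

lemma del_mixt_lt: "i < j \<Longrightarrow> del i (mixt N j t) = mixt N (j - 1) (del i t)"
  by (auto simp: del_def mixt_def fun_eq_iff)

lemma del_mixt_gt: "Suc j < i \<Longrightarrow> del i (mixt N j t) = mixt N j (del (i - 1) t)"
  by (auto simp: del_def mixt_def fun_eq_iff)

lemma del_mixt_eq: "del j (mixt N j t) = Dt N j t"
  by (auto simp: del_def mixt_def Dt_def fun_eq_iff)

lemma del_mixt_Suc: "del (Suc j) (mixt N j t) = Dt N (Suc j) t"
  by (auto simp: del_def mixt_def Dt_def fun_eq_iff)

lemma Dt_0: "Dt N 0 t = t"
  by (auto simp: Dt_def fun_eq_iff)

lemma inner_split:
  fixes g :: "nat \<Rightarrow> complex"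
  assumes "j \<le> K"
  shows "(\<Sum>i\<le>Suc K. g i) = (\<Sum>i<j. g i) + g j + g (Suc j) + (\<Sum>i\<in>{Suc j..K}. g (Suc i))"
proof -
  have e: "{..Suc K} = {..<j} \<union> {j..Suc K}" using assms by auto
  have "(\<Sum>i\<le>Suc K. g i) = sum g ({..<j} \<union> {j..Suc K})" by (subst e) (rule refl)
  also have "\<dots> = (\<Sum>i<j. g i) + (\<Sum>i\<in>{j..Suc K}. g i)"
    by (rule sum.union_disjoint) auto
  finally have "(\<Sum>i\<le>Suc K. g i) = (\<Sum>i<j. g i) + (\<Sum>i\<in>{j..Suc K}. g i)" .
  moreover have "{j..Suc K} = insert j (insert (Suc j) {Suc (Suc j)..Suc K})" using assms by auto
  moreover have "(\<Sum>i\<in>{Suc (Suc j)..Suc K}. g i) = (\<Sum>i\<in>{Suc j..K}. g (Suc i))"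
    by (rule sum.shift_bounds_cl_Suc_ivl)
  ultimately show ?thesis by (simp add: add.assoc)
qed

lemma sum3: "(\<Sum>j\<in>A. a j + b j - c j) = sum a A + sum b A - (sum c A :: 'a::ab_group_add)"
  by (simp add: sum.distrib sum_subtractf)

lemma prism_homotopy:
  "cb k (prism N (Suc k) \<omega>) t + prism N (Suc (Suc k)) (cb (Suc k) \<omega>) t
     = \<omega> t - \<omega> (Dt N (Suc (Suc k)) t)"
proof -
  define K where "K = Suc k"
  define F where "F i j = (-1::complex)^(i+j) * \<omega> (mixt N j (del i t))" for i j
  have S1: "cb k (prism N (Suc k) \<omega>) t = (\<Sum>j<K. (\<Sum>i\<le>j. F i j) + (\<Sum>i\<in>{Suc j..K}. F i j))"
  proof -
    have "cb k (prism N (Suc k) \<omega>) t = (\<Sum>i\<le>K. \<Sum>j<K. F i j)"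
      unfolding cb_def prism_def F_def K_def sum_distrib_left
      by (intro sum.cong refl) (simp add: power_add mult.assoc)
    also have "\<dots> = (\<Sum>j<K. \<Sum>i\<le>K. F i j)" by (rule sum.swap)
    also have "\<dots> = (\<Sum>j<K. (\<Sum>i\<le>j. F i j) + (\<Sum>i\<in>{Suc j..K}. F i j))"
    proof (intro sum.cong refl)
      fix j assume "j \<in> {..<K}"
      then have "{..K} = {..j} \<union> {Suc j..K}" by auto
      then show "(\<Sum>i\<le>K. F i j) = (\<Sum>i\<le>j. F i j) + (\<Sum>i\<in>{Suc j..K}. F i j)"
        by (simp add: sum.union_disjoint)
    qed
    finally show ?thesis .
  qed
  have inner: "(-1)^j * (\<Sum>i\<le>Suc K. (-1)^i * \<omega> (del i (mixt N j t))) =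
      (\<Sum>i<j. - F i (j - 1)) + (\<omega> (Dt N j t) - \<omega> (Dt N (Suc j) t)) - (\<Sum>i\<in>{Suc j..K}. F i j)"
    if "j \<le> K" for j
  proof -
    have "(\<Sum>i\<le>Suc K. (-1)^i * \<omega> (del i (mixt N j t))) =
       (\<Sum>i<j. (-1)^i * \<omega> (del i (mixt N j t))) + (-1)^j * \<omega> (del j (mixt N j t))
        + (-1)^(Suc j) * \<omega> (del (Suc j) (mixt N j t))
        + (\<Sum>i\<in>{Suc j..K}. (-1)^(Suc i) * \<omega> (del (Suc i) (mixt N j t)))"
      by (rule inner_split[OF that])
    also have "(\<Sum>i<j. (-1)^i * \<omega> (del i (mixt N j t))) = (\<Sum>i<j. (-1)^i * \<omega> (mixt N (j - 1) (del i t)))"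
      by (intro sum.cong refl) (simp add: del_mixt_lt)
    also have "(\<Sum>i\<in>{Suc j..K}. (-1)^(Suc i) * \<omega> (del (Suc i) (mixt N j t)))
        = (\<Sum>i\<in>{Suc j..K}. - ((-1)^i * \<omega> (mixt N j (del i t))))"
      by (intro sum.cong refl) (simp add: del_mixt_gt)
    finally have E: "(\<Sum>i\<le>Suc K. (-1)^i * \<omega> (del i (mixt N j t))) =
       (\<Sum>i<j. (-1)^i * \<omega> (mixt N (j - 1) (del i t))) + (-1)^j * \<omega> (Dt N j t)
        - (-1)^j * \<omega> (Dt N (Suc j) t)
        - (\<Sum>i\<in>{Suc j..K}. ((-1)^i * \<omega> (mixt N j (del i t))))"
      by (simp add: del_mixt_eq del_mixt_Suc sum_negf del: sum.atMost_Suc)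
    then have "(-1)^j * (\<Sum>i\<le>Suc K. (-1)^i * \<omega> (del i (mixt N j t))) =
       (\<Sum>i<j. (-1)^j * ((-1)^i * \<omega> (mixt N (j - 1) (del i t)))) + ((-1)^j * (-1)^j) * \<omega> (Dt N j t)
        - ((-1)^j * (-1)^j) * \<omega> (Dt N (Suc j) t)
        - (\<Sum>i\<in>{Suc j..K}. (-1)^j * ((-1)^i * \<omega> (mixt N j (del i t))))"
      unfolding E by (simp add: algebra_simps sum_distrib_left del: sum.atMost_Suc)
    also have "(-1::complex)^j * (-1)^j = 1" by (simp add: power_mult_distrib[symmetric])
    also have "(\<Sum>i<j. (-1)^j * ((-1)^i * \<omega> (mixt N (j - 1) (del i t)))) = (\<Sum>i<j. - F i (j - 1))"
    proof (intro sum.cong refl)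
      fix i assume "i \<in> {..<j}"
      then have "j = Suc (j - 1)" by auto
      then have "(-1::complex)^j = - ((-1)^(j-1))" by (metis power_Suc mult_minus1)
      then show "(-1)^j * ((-1)^i * \<omega> (mixt N (j - 1) (del i t))) = - F i (j - 1)"
        by (simp add: F_def power_add)
    qed
    also have "(\<Sum>i\<in>{Suc j..K}. (-1)^j * ((-1)^i * \<omega> (mixt N j (del i t)))) = (\<Sum>i\<in>{Suc j..K}. F i j)"
      by (intro sum.cong refl) (simp add: F_def power_add)
    finally show ?thesis by (simp add: algebra_simps)
  qed
  have S2: "prism N (Suc (Suc k)) (cb (Suc k) \<omega>) t =
     (\<Sum>j\<le>K. (\<Sum>i<j. - F i (j - 1)) + (\<omega> (Dt N j t) - \<omega> (Dt N (Suc j) t)) - (\<Sum>i\<in>{Suc j..K}. F i j))"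
    unfolding prism_def cb_def K_def[symmetric] lessThan_Suc_atMost
    by (intro sum.cong refl inner) auto
  have T1: "(\<Sum>j\<le>K. (\<Sum>i<j. - F i (j - 1))) = - (\<Sum>j<K. (\<Sum>i\<le>j. F i j))"
  proof -
    have "(\<Sum>j\<le>K. (\<Sum>i<j. - F i (j - 1))) = (\<Sum>i<0. - F i (0-1)) + (\<Sum>j\<le>k. \<Sum>i<Suc j. - F i (Suc j - 1))"
      unfolding K_def by (rule sum.atMost_Suc_shift)
    also have "\<dots> = (\<Sum>j\<le>k. - (\<Sum>i\<le>j. F i j))"
      by (simp add: lessThan_Suc_atMost sum_negf del: sum.lessThan_Suc)
    also have "\<dots> = - (\<Sum>j<K. (\<Sum>i\<le>j. F i j))"
      by (simp add: K_def lessThan_Suc_atMost sum_negf del: sum.lessThan_Suc sum.atMost_Suc)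
    finally show ?thesis .
  qed
  have T2: "(\<Sum>j\<le>K. (\<omega> (Dt N j t) - \<omega> (Dt N (Suc j) t))) = \<omega> t - \<omega> (Dt N (Suc K) t)"
    using sum_telescope[of "\<lambda>j. \<omega> (Dt N j t)" K] by (simp add: Dt_0)
  have T3: "(\<Sum>j\<le>K. (\<Sum>i\<in>{Suc j..K}. F i j)) = (\<Sum>j<K. (\<Sum>i\<in>{Suc j..K}. F i j))"
    unfolding K_def lessThan_Suc_atMost[symmetric] by simp
  have P: "prism N (Suc (Suc k)) (cb (Suc k) \<omega>) t = - (\<Sum>j<K. \<Sum>i\<le>j. F i j) + (\<omega> t - \<omega> (Dt N (Suc K) t))
       - (\<Sum>j<K. \<Sum>i\<in>{Suc j..K}. F i j)"
    unfolding S2 sum3 T1 T2 T3 by (rule refl)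
  have Q: "cb k (prism N (Suc k) \<omega>) t = (\<Sum>j<K. \<Sum>i\<le>j. F i j) + (\<Sum>j<K. \<Sum>i\<in>{Suc j..K}. F i j)"
    unfolding S1 sum.distrib by (rule refl)
  have "Suc K = Suc (Suc k)" by (simp add: K_def)
  then show ?thesis unfolding P Q by (simp add: algebra_simps)
qed




definition relK :: "nat \<Rightarrow> nat \<Rightarrow> (nat \<Rightarrow> nat set) \<Rightarrow> bool" where
  "relK n k t \<longleftrightarrow> (\<exists>i\<in>{1..n}. (\<forall>j\<le>k. i \<in> t j) \<or> (\<forall>j\<le>k. i \<notin> t j))"

definition dflag :: "nat \<Rightarrow> (nat \<Rightarrow> nat set) \<Rightarrow> bool" where
  "dflag n t \<longleftrightarrow> t n = {} \<and> (\<forall>j<n. \<exists>a\<in>{1..n}. a \<notin> t (Suc j) \<and> t j = insert a (t (Suc j)))"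

definition depk :: "nat \<Rightarrow> ((nat \<Rightarrow> 'v) \<Rightarrow> complex) \<Rightarrow> bool" where
  "depk k \<omega> \<longleftrightarrow> (\<forall>t t'. (\<forall>j\<le>k. t j = t' j) \<longrightarrow> \<omega> t = \<omega> t')"

lemma dflag_sub_aux: "dflag n t \<Longrightarrow> d \<le> n \<Longrightarrow> t (n - d) \<subseteq> {1..n}"
proof (induction d)
  case 0 then show ?case by (simp add: dflag_def)
next
  case (Suc d)
  then have "n - Suc d < n" and "Suc (n - Suc d) = n - d" by auto
  with Suc.prems obtain a where "a \<in> {1..n}" "t (n - Suc d) = insert a (t (n - d))"
    unfolding dflag_def by metis
  with Suc show ?case by auto
qed

lemma dflag_sub: "dflag n t \<Longrightarrow> l \<le> n \<Longrightarrow> t l \<subseteq> {1..n}"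
  using dflag_sub_aux[of n t "n - l"] by auto

lemma mixt_dflag:
  assumes "dflag m t" "j \<le> m"
  shows "dflag (Suc m) (mixt (Suc m) j (\<lambda>l. t l - {Suc m}))"
proof -
  let ?n = "Suc m"
  let ?s = "mixt ?n j (\<lambda>l. t l - {?n})"
  have tl: "t l - {?n} = t l" if "l \<le> m" for l using dflag_sub[OF assms(1) that] by auto
  have nt: "?n \<notin> t l" if "l \<le> m" for l using dflag_sub[OF assms(1) that] by auto
  have "?s ?n = {}" using assms tl[of m] by (simp add: mixt_def dflag_def)
  moreover have "\<exists>a\<in>{1..?n}. a \<notin> ?s (Suc j') \<and> ?s j' = insert a (?s (Suc j'))" if "j' < ?n" for j'
  proof (cases "j' < j")
    case True
    with assms obtain a where a: "a \<in> {1..m}" "a \<notin> t (Suc j')" "t j' = insert a (t (Suc j'))"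
      unfolding dflag_def by (metis order_less_le_trans)
    have "?s j' = insert ?n (t j')" "?s (Suc j') = insert ?n (t (Suc j'))"
      using True assms tl by (auto simp: mixt_def)
    with a show ?thesis by (intro bexI[of _ a]) auto
  next
    case False
    show ?thesis
    proof (cases "j' = j")
      case True
      have "?s j' = insert ?n (t j)" "?s (Suc j') = t j"
        using True assms tl by (auto simp: mixt_def)
      with nt[of j] assms show ?thesis by (intro bexI[of _ ?n]) auto
    next
      case False
      with \<open>\<not> j' < j\<close> have jj: "j < j'" by auto
      then have j'm: "j' - 1 < m" using that by auto
      with assms obtain a where a: "a \<in> {1..m}" "a \<notin> t (Suc (j' - 1))" "t (j' - 1) = insert a (t (Suc (j' - 1)))"
        unfolding dflag_def by metis
      have "Suc (j' - 1) = j'" using jj by auto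
      moreover have "?s j' = t (j' - 1)" "?s (Suc j') = t j'"
        using jj j'm tl that by (auto simp: mixt_def)
      ultimately show ?thesis using a by (intro bexI[of _ a]) auto
    qed
  qed
  ultimately show ?thesis unfolding dflag_def by blast
qed

lemma cb_diff: "cb k (\<lambda>t. f t - g t) t = cb k f t - cb k g t"
  by (simp add: cb_def sum_subtractf right_diff_distrib)

lemma del_map: "del i (\<lambda>l. t l - A) = (\<lambda>l. del i t l - A)"
  by (auto simp: del_def fun_eq_iff)

lemma H_facts:
  fixes \<omega> :: "(nat \<Rightarrow> nat set) \<Rightarrow> complex"
  assumes R: "\<And>t. relK (Suc m) (Suc m) t \<Longrightarrow> \<omega> t = 0"
    and C: "\<And>t. cb (Suc m) \<omega> t = 0"
    and D: "depk (Suc m) \<omega>"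
  shows h1: "cb m (prism (Suc m) (Suc m) \<omega>) t = \<omega> t"
    and h2: "i \<in> {1..m} \<Longrightarrow> (\<forall>j\<le>m. i \<in> t j) \<or> (\<forall>j\<le>m. i \<notin> t j) \<Longrightarrow> prism (Suc m) (Suc m) \<omega> t = 0"
    and h3: "(\<forall>j\<le>m. Suc m \<in> t j) \<Longrightarrow> prism (Suc m) (Suc m) \<omega> t = 0"
    and hdep: "depk m (prism (Suc m) (Suc m) \<omega>)"
proof -
  have "cb m (prism (Suc m) (Suc m) \<omega>) t + prism (Suc m) (Suc (Suc m)) (cb (Suc m) \<omega>) t = \<omega> t - \<omega> (Dt (Suc m) (Suc (Suc m)) t)"
    by (rule prism_homotopy)
  moreover have "prism (Suc m) (Suc (Suc m)) (cb (Suc m) \<omega>) t = 0" by (simp add: prism_def C)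
  moreover have "\<omega> (Dt (Suc m) (Suc (Suc m)) t) = 0"
    by (rule R) (auto simp: relK_def Dt_def intro!: bexI[of _ "Suc m"])
  ultimately show "cb m (prism (Suc m) (Suc m) \<omega>) t = \<omega> t" by simp
next
  assume i: "i \<in> {1..m}" and c: "(\<forall>j\<le>m. i \<in> t j) \<or> (\<forall>j\<le>m. i \<notin> t j)"
  have "\<omega> (mixt (Suc m) j t) = 0" if "j < Suc m" for j
  proof (rule R)
    show "relK (Suc m) (Suc m) (mixt (Suc m) j t)" unfolding relK_def
    proof (intro bexI[of _ i])
      show "i \<in> {1..(Suc m)}" using i by auto
      show "(\<forall>ja\<le>(Suc m). i \<in> mixt (Suc m) j t ja) \<or> (\<forall>ja\<le>(Suc m). i \<notin> mixt (Suc m) j t ja)"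
        using c i that by (auto simp: mixt_def)
    qed
  qed
  then show "prism (Suc m) (Suc m) \<omega> t = 0" by (simp add: prism_def)
next
  assume c: "\<forall>j\<le>m. (Suc m) \<in> t j"
  have "\<omega> (mixt (Suc m) j t) = 0" if "j < Suc m" for j
    by (rule R) (use c that in \<open>auto simp: relK_def mixt_def intro!: bexI[of _ "Suc m"]\<close>)
  then show "prism (Suc m) (Suc m) \<omega> t = 0" by (simp add: prism_def)
next
  show "depk m (prism (Suc m) (Suc m) \<omega>)" unfolding depk_def
  proof (intro allI impI)
    fix t t' :: "nat \<Rightarrow> nat set" assume e: "\<forall>j\<le>m. t j = t' j"
    have "\<omega> (mixt (Suc m) j t) = \<omega> (mixt (Suc m) j t')" if "j < Suc m" for j
    proof -
      have "mixt (Suc m) j t l = mixt (Suc m) j t' l" if "l \<le> Suc m" for l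
        using e that \<open>j < Suc m\<close> by (auto simp: mixt_def)
      then show ?thesis using D unfolding depk_def by blast
    qed
    then show "prism (Suc m) (Suc m) \<omega> t = prism (Suc m) (Suc m) \<omega> t'" by (simp add: prism_def)
  qed
qed


lemma beta_facts:
  fixes \<omega> :: "(nat \<Rightarrow> nat set) \<Rightarrow> complex"
  assumes R: "\<And>t. relK (Suc m) (Suc m) t \<Longrightarrow> \<omega> t = 0"
    and C: "\<And>t. cb (Suc m) \<omega> t = 0"
    and D: "depk (Suc m) \<omega>"
    and F: "\<And>t. dflag (Suc m) t \<Longrightarrow> \<omega> t = 0"
  defines "\<beta> \<equiv> (\<lambda>t. prism (Suc m) (Suc m) \<omega> (\<lambda>l. t l - {Suc m}))"
  shows b1: "relK m m t \<Longrightarrow> \<beta> t = 0"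
    and b2: "cb m \<beta> t = 0"
    and b3: "dflag m t \<Longrightarrow> \<beta> t = 0"
    and b4: "depk m \<beta>"
    and b5: "(\<forall>j\<le>m. Suc m \<notin> t j) \<Longrightarrow> prism (Suc m) (Suc m) \<omega> t = \<beta> t"
proof -
  assume "relK m m t"
  then obtain i where i: "i \<in> {1..m}" "(\<forall>j\<le>m. i \<in> t j) \<or> (\<forall>j\<le>m. i \<notin> t j)"
    unfolding relK_def by blast
  then have "(\<forall>j\<le>m. i \<in> t j - {Suc m}) \<or> (\<forall>j\<le>m. i \<notin> t j - {Suc m})" by auto
  then show "\<beta> t = 0" unfolding \<beta>_def using h2[OF R C D i(1), of "\<lambda>l. t l - {Suc m}"] by simp
next
  have "cb m \<beta> t = cb m (prism (Suc m) (Suc m) \<omega>) (\<lambda>l. t l - {Suc m})"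
    unfolding \<beta>_def cb_def del_map by (rule refl)
  also have "\<dots> = \<omega> (\<lambda>l. t l - {Suc m})" by (rule h1[OF R C D])
  also have "\<dots> = 0" by (rule R) (auto simp: relK_def intro!: bexI[of _ "Suc m"])
  finally show "cb m \<beta> t = 0" .
next
  assume fl: "dflag m t"
  have "\<omega> (mixt (Suc m) j (\<lambda>l. t l - {Suc m})) = 0" if "j < Suc m" for j
    using F mixt_dflag[OF fl] that by simp
  then show "\<beta> t = 0" by (simp add: \<beta>_def prism_def)
next
  show "depk m \<beta>" unfolding depk_def
  proof (intro allI impI)
    fix t t' :: "nat \<Rightarrow> nat set" assume "\<forall>j\<le>m. t j = t' j"
    then have "\<forall>j\<le>m. t j - {Suc m} = t' j - {Suc m}" by simp
    moreover have "(\<forall>j\<le>m. (\<lambda>l. t l - {Suc m}) j = (\<lambda>l. t' l - {Suc m}) j) \<longrightarrow>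
        prism (Suc m) (Suc m) \<omega> (\<lambda>l. t l - {Suc m}) = prism (Suc m) (Suc m) \<omega> (\<lambda>l. t' l - {Suc m})"
      by (rule hdep[OF R C D, unfolded depk_def, THEN spec[where x="\<lambda>l. t l - {Suc m}"], THEN spec[where x="\<lambda>l. t' l - {Suc m}"]])
    ultimately show "\<beta> t = \<beta> t'" unfolding \<beta>_def by simp
  qed
next
  assume "\<forall>j\<le>m. Suc m \<notin> t j"
  then have "\<forall>j\<le>m. t j = t j - {Suc m}" by auto
  moreover have "(\<forall>j\<le>m. t j = (\<lambda>l. t l - {Suc m}) j) \<longrightarrow>
        prism (Suc m) (Suc m) \<omega> t = prism (Suc m) (Suc m) \<omega> (\<lambda>l. t l - {Suc m})"
      by (rule hdep[OF R C D, unfolded depk_def, THEN spec[where x="t"], THEN spec[where x="\<lambda>l. t l - {Suc m}"]])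
  ultimately show "prism (Suc m) (Suc m) \<omega> t = \<beta> t" unfolding \<beta>_def by simp
qed

lemma main_induct:
  "\<forall>\<omega>::(nat \<Rightarrow> nat set) \<Rightarrow> complex. depk (Suc m) \<omega> \<longrightarrow> (\<forall>t. relK (Suc m) (Suc m) t \<longrightarrow> \<omega> t = 0) \<longrightarrow>
     (\<forall>t. cb (Suc m) \<omega> t = 0) \<longrightarrow> (\<forall>t. dflag (Suc m) t \<longrightarrow> \<omega> t = 0) \<longrightarrow>
     (\<exists>\<Psi>. (\<forall>t. relK (Suc m) m t \<longrightarrow> \<Psi> t = 0) \<and> (\<forall>t. cb m \<Psi> t = \<omega> t))"
proof (induction m)
  case 0
  show ?case
  proof (intro allI impI)
    fix \<omega> :: "(nat \<Rightarrow> nat set) \<Rightarrow> complex"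
    assume D: "depk (Suc 0) \<omega>" and R: "\<forall>t. relK (Suc 0) (Suc 0) t \<longrightarrow> \<omega> t = 0"
      and C: "\<forall>t. cb (Suc 0) \<omega> t = 0" and F: "\<forall>t. dflag (Suc 0) t \<longrightarrow> \<omega> t = 0"
    define \<beta> where "\<beta> = (\<lambda>t. prism (Suc 0) (Suc 0) \<omega> (\<lambda>l. t l - {Suc 0}))"
    have bf1: "\<And>t. relK 0 0 t \<Longrightarrow> \<beta> t = 0"
      using beta_facts(1)[OF R[rule_format] C[rule_format] D F[rule_format]] unfolding \<beta>_def by blast
    have bf2: "\<And>t. cb 0 \<beta> t = 0"
      using beta_facts(2)[OF R[rule_format] C[rule_format] D F[rule_format]] unfolding \<beta>_def by blast
    have bf3: "\<And>t. dflag 0 t \<Longrightarrow> \<beta> t = 0"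
      using beta_facts(3)[OF R[rule_format] C[rule_format] D F[rule_format]] unfolding \<beta>_def by blast
    have bf4: "depk 0 \<beta>"
      using beta_facts(4)[OF R[rule_format] C[rule_format] D F[rule_format]] unfolding \<beta>_def by blast
    have bf5: "\<And>t. (\<forall>j\<le>0. Suc 0 \<notin> t j) \<Longrightarrow> prism (Suc 0) (Suc 0) \<omega> t = \<beta> t"
      using beta_facts(5)[OF R[rule_format] C[rule_format] D F[rule_format]] unfolding \<beta>_def by blast
    note bf = bf1 bf2 bf3 bf4 bf5
    have bz: "\<beta> t = 0" for t
    proof -
      define t' where "t' = (\<lambda>l. if l = 0 then {} else t (l - 1))"
      have "cb 0 \<beta> t' = \<beta> (del 0 t') - \<beta> (del 1 t')" by (simp add: cb_def)
      moreover have "del 0 t' = t" by (simp add: del_def t'_def)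
      moreover have "\<beta> (del 1 t') = 0" by (rule bf(3)) (simp add: dflag_def del_def t'_def)
      ultimately show ?thesis using bf(2)[of t'] by simp
    qed
    show "\<exists>\<Psi>. (\<forall>t. relK (Suc 0) 0 t \<longrightarrow> \<Psi> t = 0) \<and> (\<forall>t. cb 0 \<Psi> t = \<omega> t)"
    proof (intro exI conjI allI impI)
      fix t assume "relK (Suc 0) 0 t"
      then have "Suc 0 \<in> t 0 \<or> Suc 0 \<notin> t 0" by simp
      then show "prism (Suc 0) (Suc 0) \<omega> t = 0"
      proof
        assume "Suc 0 \<in> t 0" then show ?thesis by (intro h3[OF R[rule_format] C[rule_format] D]) auto
      next
        assume "Suc 0 \<notin> t 0" then show ?thesis using bf(5)[of t] bz by auto
      qed
    next
      fix t show "cb 0 (prism (Suc 0) (Suc 0) \<omega>) t = \<omega> t" by (rule h1[OF R[rule_format] C[rule_format] D])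
    qed
  qed
next
  case (Suc m')
  define m where "m = Suc m'"
  show ?case unfolding m_def[symmetric]
  proof (intro allI impI)
    fix \<omega> :: "(nat \<Rightarrow> nat set) \<Rightarrow> complex"
    assume D: "depk (Suc m) \<omega>" and R: "\<forall>t. relK (Suc m) (Suc m) t \<longrightarrow> \<omega> t = 0"
      and C: "\<forall>t. cb (Suc m) \<omega> t = 0" and F: "\<forall>t. dflag (Suc m) t \<longrightarrow> \<omega> t = 0"
    define \<beta> where "\<beta> = (\<lambda>t. prism (Suc m) (Suc m) \<omega> (\<lambda>l. t l - {Suc m}))"
    define H where "H = prism (Suc m) (Suc m) \<omega>"
    have bf1: "\<And>t. relK m m t \<Longrightarrow> \<beta> t = 0"
      using beta_facts(1)[OF R[rule_format] C[rule_format] D F[rule_format]] unfolding \<beta>_def by blast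
    have bf2: "\<And>t. cb m \<beta> t = 0"
      using beta_facts(2)[OF R[rule_format] C[rule_format] D F[rule_format]] unfolding \<beta>_def by blast
    have bf3: "\<And>t. dflag m t \<Longrightarrow> \<beta> t = 0"
      using beta_facts(3)[OF R[rule_format] C[rule_format] D F[rule_format]] unfolding \<beta>_def by blast
    have bf4: "depk m \<beta>"
      using beta_facts(4)[OF R[rule_format] C[rule_format] D F[rule_format]] unfolding \<beta>_def by blast
    have bf5: "\<And>t. (\<forall>j\<le>m. Suc m \<notin> t j) \<Longrightarrow> prism (Suc m) (Suc m) \<omega> t = \<beta> t"
      using beta_facts(5)[OF R[rule_format] C[rule_format] D F[rule_format]] unfolding \<beta>_def by blast
    note bf = bf1 bf2 bf3 bf4 bf5
    from Suc.IH[rule_format, of \<beta>, folded m_def] bf(1-4)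
    obtain \<gamma> where g1: "\<And>t. relK m m' t \<Longrightarrow> \<gamma> t = 0" and g2: "\<And>t. cb m' \<gamma> t = \<beta> t"
      by blast
    define \<Gamma> where "\<Gamma> = (\<lambda>t. if \<forall>j\<le>m'. Suc m \<notin> t j then \<gamma> t else 0)"
    define \<Psi> where "\<Psi> = (\<lambda>t. H t - cb m' \<Gamma> t)"
    show "\<exists>\<Psi>. (\<forall>t. relK (Suc m) m t \<longrightarrow> \<Psi> t = 0) \<and> (\<forall>t. cb m \<Psi> t = \<omega> t)"
    proof (intro exI[of _ \<Psi>] conjI allI impI)
      fix t
      have "cb m \<Psi> t = cb m H t - cb m (cb m' \<Gamma>) t" unfolding \<Psi>_def by (rule cb_diff)
      also have "cb m (cb m' \<Gamma>) t = 0" unfolding m_def by (rule cb_cb)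
      also have "cb m H t = \<omega> t" unfolding H_def by (rule h1[OF R[rule_format] C[rule_format] D])
      finally show "cb m \<Psi> t = \<omega> t" by simp
    next
      fix t assume "relK (Suc m) m t"
      then obtain i where i: "i \<in> {1..Suc m}" and c: "(\<forall>j\<le>m. i \<in> t j) \<or> (\<forall>j\<le>m. i \<notin> t j)"
        unfolding relK_def by blast
      have dl: "del i' t j = t j \<or> del i' t j = t (Suc j)" for i' j by (simp add: del_def)
      show "\<Psi> t = 0"
      proof (cases "i = Suc m")
        case True
        from c show ?thesis
        proof
          assume c1: "\<forall>j\<le>m. i \<in> t j"
          have "H t = 0" unfolding H_def by (rule h3[OF R[rule_format] C[rule_format] D]) (use c1 True in auto)
          moreover have "\<Gamma> (del i' t) = 0" for i'
          proof -
            have "Suc m \<in> del i' t 0" using c1 True by (simp add: del_def m_def)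
            then show ?thesis by (auto simp: \<Gamma>_def)
          qed
          ultimately show ?thesis by (simp add: \<Psi>_def cb_def)
        next
          assume c2: "\<forall>j\<le>m. i \<notin> t j"
          have "H t = \<beta> t" unfolding H_def by (rule bf(5)) (use c2 True in auto)
          moreover have "\<Gamma> (del i' t) = \<gamma> (del i' t)" if "i' \<le> Suc m'" for i'
          proof -
            have "\<forall>j\<le>m'. Suc m \<notin> del i' t j" using c2 True by (auto simp: del_def m_def)
            then show ?thesis by (simp add: \<Gamma>_def)
          qed
          then have "cb m' \<Gamma> t = cb m' \<gamma> t" by (simp add: cb_def)
          ultimately show ?thesis using g2[of t] by (simp add: \<Psi>_def)
        qed
      next
        case False
        with i have i': "i \<in> {1..m}" by auto
        have "H t = 0" unfolding H_def by (rule h2[OF R[rule_format] C[rule_format] D i' c])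
        moreover have "\<Gamma> (del i' t) = 0" for i'
        proof -
          have "relK m m' (del i' t)" unfolding relK_def
            by (rule bexI[OF _ i']) (use c in \<open>auto simp: del_def m_def\<close>)
          then show ?thesis using g1 by (simp add: \<Gamma>_def)
        qed
        ultimately show ?thesis by (simp add: \<Psi>_def cb_def)
      qed
    qed
  qed
qed




lemma perm_le: "p permutes {..k} \<Longrightarrow> j \<le> k \<Longrightarrow> p j \<le> k"
  using permutes_in_image[of p "{..k}" j] by simp

lemma perm_inv_le: "p permutes {..k} \<Longrightarrow> j \<le> k \<Longrightarrow> Hilbert_Choice.inv p j \<le> k"
  using perm_le[OF permutes_inv] by blast

lemma wedge_det: "wedge k f t = Determinant.det (mat (Suc k) (Suc k) (\<lambda>(j,i). f i (t j)))"
proof -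
  have e: "{0..<Suc k} = {..k}" by auto
  show ?thesis unfolding wedge_def det_def'[OF mat_carrier] e
  proof (intro sum.cong refl arg_cong2[where f="(*)"] prod.cong)
    fix p j assume "p \<in> {p. p permutes {..k}}" "j \<in> {..k}"
    then have "p j \<in> {..k}" "j \<in> {..k}" by (auto simp: perm_le)
    then show "f (p j) (t j) = mat (Suc k) (Suc k) (\<lambda>(j, i). f i (t j)) $$ (j, p j)" by simp
  qed
qed

lemma wedge_ident:
  assumes "i \<noteq> i'" "i \<le> k" "i' \<le> k" "\<forall>j\<le>k. f i (t j) = f i' (t j)"
  shows "wedge k f t = 0"
  unfolding wedge_det
  by (rule det_identical_columns[OF mat_carrier, of i i']) (use assms in \<open>auto intro!: eq_vecI\<close>)

lemma wedge_zero_col: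
  assumes "i \<le> k" "\<forall>j\<le>k. f i (t j) = 0"
  shows "wedge k f t = 0"
  unfolding wedge_def
proof (intro sum.neutral ballI)
  fix p assume "p \<in> {p. p permutes {..k}}"
  then have p: "p permutes {..k}" by simp
  have "Hilbert_Choice.inv p i \<in> {..k}" using assms(1) p by (simp add: perm_inv_le)
  moreover have "p (Hilbert_Choice.inv p i) = i" using p by (simp add: permutes_inverses(1))
  ultimately have "(\<Prod>j\<le>k. f (p j) (t j)) = 0" using assms(2)
    by (intro prod_zero) (auto intro!: bexI[of _ "Hilbert_Choice.inv p i"])
  then show "of_int (sign p) * (\<Prod>j\<le>k. f (p j) (t j)) = 0" by simp
qed

lemma wedge_cb:
  "cb k (wedge k f) t = wedge (Suc k) (\<lambda>i. if i = 0 then (\<lambda>_. 1) else f (i - 1)) t"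
proof -
  define g where "g = (\<lambda>i. if i = 0 then (\<lambda>_. 1::complex) else f (i - 1))"
  define M where "M = mat (Suc (Suc k)) (Suc (Suc k)) (\<lambda>(j,i). g i (t j))"
  have Mc: "M \<in> carrier_mat (Suc (Suc k)) (Suc (Suc k))" by (simp add: M_def)
  have del: "mat_delete M j 0 = mat (Suc k) (Suc k) (\<lambda>(j',i). f i (del j t j'))" if "j < Suc (Suc k)" for j
    by (rule eq_matI) (auto simp: mat_delete_def M_def g_def del_def)
  have "wedge (Suc k) g t = Determinant.det M" unfolding wedge_det M_def ..
  also have "\<dots> = (\<Sum>j<Suc (Suc k). M $$ (j, 0) * cofactor M j 0)"
    by (rule laplace_expansion_column[OF Mc]) simp
  also have "\<dots> = (\<Sum>j<Suc (Suc k). (-1)^j * wedge k f (del j t))"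
  proof (intro sum.cong refl)
    fix j assume "j \<in> {..<Suc (Suc k)}"
    then have j: "j < Suc (Suc k)" by simp
    have "M $$ (j, 0) = 1" using j by (simp add: M_def g_def)
    then show "M $$ (j, 0) * cofactor M j 0 = (-1)^j * wedge k f (del j t)"
      by (simp add: cofactor_def del[OF j] wedge_det)
  qed
  also have "\<dots> = cb k (wedge k f) t" by (simp add: cb_def lessThan_Suc_atMost)
  finally show ?thesis by (simp add: g_def)
qed

lemma wedge_col0_sum:
  assumes S: "finite S" "0 \<notin> S" "S \<subseteq> {..k}" and g: "\<And>v. g 0 v = (\<Sum>i\<in>S. g i v)"
  shows "wedge k g t = 0"
proof -
  have prod_eq: "(\<Prod>j\<le>k. g (p j) (t j)) = (\<Sum>i\<in>S. \<Prod>j\<le>k. (g(0 := g i)) (p j) (t j))"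
    if p: "p permutes {..k}" for p
  proof -
    define j0 where "j0 = Hilbert_Choice.inv p 0"
    have j0: "j0 \<in> {..k}" "p j0 = 0" using p by (auto simp: j0_def perm_inv_le permutes_inverses(1))
    have nz: "p j \<noteq> 0" if "j \<noteq> j0" for j using that j0(2) p by (metis permutes_inverses(2) j0_def)
    have "(\<Prod>j\<le>k. g (p j) (t j)) = g 0 (t j0) * (\<Prod>j\<in>{..k} - {j0}. g (p j) (t j))"
      using j0 by (simp add: prod.remove)
    also have "\<dots> = (\<Sum>i\<in>S. g i (t j0) * (\<Prod>j\<in>{..k} - {j0}. g (p j) (t j)))"
      by (simp add: g sum_distrib_right)
    also have "\<dots> = (\<Sum>i\<in>S. \<Prod>j\<le>k. (g(0 := g i)) (p j) (t j))"
    proof (intro sum.cong refl)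
      fix i
      have "(\<Prod>j\<le>k. (g(0 := g i)) (p j) (t j)) = (g(0 := g i)) (p j0) (t j0) * (\<Prod>j\<in>{..k} - {j0}. (g(0 := g i)) (p j) (t j))"
        using j0 by (simp add: prod.remove)
      also have "(\<Prod>j\<in>{..k} - {j0}. (g(0 := g i)) (p j) (t j)) = (\<Prod>j\<in>{..k} - {j0}. g (p j) (t j))"
        by (intro prod.cong refl) (auto simp: nz)
      finally show "g i (t j0) * (\<Prod>j\<in>{..k} - {j0}. g (p j) (t j)) = (\<Prod>j\<le>k. (g(0 := g i)) (p j) (t j))"
        using j0 by simp
    qed
    finally show ?thesis .
  qed
  have "wedge k g t = (\<Sum>p\<in>{p. p permutes {..k}}. \<Sum>i\<in>S. of_int (sign p) * (\<Prod>j\<le>k. (g(0 := g i)) (p j) (t j)))"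
    unfolding wedge_def by (intro sum.cong refl) (simp add: prod_eq sum_distrib_left)
  also have "\<dots> = (\<Sum>i\<in>S. wedge k (g(0 := g i)) t)"
    unfolding wedge_def by (rule sum.swap)
  also have "\<dots> = 0"
  proof (intro sum.neutral ballI)
    fix i assume i: "i \<in> S"
    then have "i \<noteq> 0" "i \<le> k" using S by (metis, auto)
    then show "wedge k (g(0 := g i)) t = 0"
      by (intro wedge_ident[of 0 i]) auto
  qed
  finally show ?thesis .
qed


definition th1 :: "nat \<Rightarrow> (nat \<Rightarrow> 'a set) \<Rightarrow> (nat \<Rightarrow> 'a) \<Rightarrow> complex" where
  "th1 n X = wedge n (\<lambda>i. if i = 0 then (\<lambda>_. 1) else ind (X i))"

definition th2 :: "nat \<Rightarrow> (nat \<Rightarrow> 'a set) \<Rightarrow> (nat \<Rightarrow> 'a) \<Rightarrow> complex" where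
  "th2 n X = (\<lambda>x. (-1) ^ n * (\<Sum>\<sigma>\<in>{\<sigma>. \<sigma> permutes {1..n}}. of_int (sign \<sigma>) * wedge n (A_fun n X \<sigma>) x))"

definition inK :: "nat \<Rightarrow> (nat \<Rightarrow> 'a set) \<Rightarrow> nat \<Rightarrow> (nat \<Rightarrow> 'a) \<Rightarrow> bool" where
  "inK n X k t \<longleftrightarrow> (\<exists>i\<in>{1..n}. (\<forall>j\<le>k. t j \<in> X i) \<or> (\<forall>j\<le>k. t j \<notin> X i))"

lemma ind_compl: "ind (- Y) v = 1 - ind Y v"
  by (simp add: ind_def indicator_def)

lemma th1_cocycle: "cb n (th1 n X) t = 0"
  unfolding th1_def wedge_cb by (rule wedge_ident[of 0 1]) auto

lemma A_part: "(\<Sum>k\<le>n. A_fun n X \<sigma> k v) = 1"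
proof -
  define B where "B k = (\<Prod>j\<in>{Suc k..n}. ind (X (\<sigma> j)) v)" for k
  have A0: "A_fun n X \<sigma> 0 v = B 0" by (simp add: A_fun_def B_def)
  have AS: "A_fun n X \<sigma> (Suc k) v = B (Suc k) - B k" if "k < n" for k
  proof -
    have "B k = ind (X (\<sigma> (Suc k))) v * B (Suc k)"
      unfolding B_def using that by (simp add: prod.atLeast_Suc_atMost)
    then show ?thesis by (simp add: A_fun_def B_def ind_compl algebra_simps)
  qed
  have "(\<Sum>k\<le>n. A_fun n X \<sigma> k v) = B 0 + (\<Sum>k<n. B (Suc k) - B k)"
    by (simp add: sum.atMost_shift A0 AS)
  also have "\<dots> = B n" by (simp add: sum_lessThan_telescope)
  also have "B n = 1" by (simp add: B_def)
  finally show ?thesis .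
qed

lemma th2_cocycle: "cb n (th2 n X) t = 0"
proof -
  let ?P = "{\<sigma>. \<sigma> permutes {1..n}}"
  have "cb n (th2 n X) t = (\<Sum>i\<le>Suc n. \<Sum>\<sigma>\<in>?P. (-1)^n * (of_int (sign \<sigma>) * ((-1)^i * wedge n (A_fun n X \<sigma>) (del i t))))"
    unfolding cb_def th2_def by (intro sum.cong refl) (simp add: sum_distrib_left mult_ac)
  also have "\<dots> = (\<Sum>\<sigma>\<in>?P. \<Sum>i\<le>Suc n. (-1)^n * (of_int (sign \<sigma>) * ((-1)^i * wedge n (A_fun n X \<sigma>) (del i t))))"
    by (rule sum.swap)
  also have "\<dots> = (\<Sum>\<sigma>\<in>?P. (-1)^n * (of_int (sign \<sigma>) * cb n (wedge n (A_fun n X \<sigma>)) t))"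
    unfolding cb_def by (simp add: sum_distrib_left del: sum.atMost_Suc)
  also have "\<dots> = 0"
  proof (intro sum.neutral ballI)
    fix \<sigma> assume "\<sigma> \<in> ?P"
    define g where "g = (\<lambda>i. if i = 0 then (\<lambda>_. 1) else A_fun n X \<sigma> (i - 1))"
    have "wedge (Suc n) g t = 0"
    proof (rule wedge_col0_sum[of "{1..Suc n}"])
      fix v
      have "(\<Sum>i\<in>{1..Suc n}. g i v) = (\<Sum>i\<in>{0..n}. g (Suc i) v)"
        using sum.shift_bounds_cl_Suc_ivl[of "\<lambda>i. g i v" 0 n] by simp
      also have "\<dots> = (\<Sum>k\<le>n. A_fun n X \<sigma> k v)" by (simp add: g_def atLeast0AtMost)
      also have "\<dots> = 1" by (rule A_part)
      finally show "g 0 v = (\<Sum>i\<in>{1..Suc n}. g i v)" by (simp add: g_def)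
    qed auto
    then show "(-1)^n * (of_int (sign \<sigma>) * cb n (wedge n (A_fun n X \<sigma>)) t) = 0"
      by (simp add: wedge_cb g_def)
  qed
  finally show ?thesis .
qed

lemma th1_vanish:
  assumes "inK n X n t" shows "th1 n X t = 0"
proof -
  from assms obtain i where i: "i \<in> {1..n}" and c: "(\<forall>j\<le>n. t j \<in> X i) \<or> (\<forall>j\<le>n. t j \<notin> X i)"
    unfolding inK_def by blast
  from c show ?thesis
  proof
    assume "\<forall>j\<le>n. t j \<in> X i"
    then show ?thesis unfolding th1_def using i
      by (intro wedge_ident[of 0 i]) (auto simp: ind_def)
  next
    assume "\<forall>j\<le>n. t j \<notin> X i"
    then show ?thesis unfolding th1_def using i
      by (intro wedge_zero_col[of i]) (auto simp: ind_def)
  qed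
qed

lemma th2_vanish:
  assumes "inK n X n t" shows "th2 n X t = 0"
proof -
  from assms obtain i where i: "i \<in> {1..n}" and c: "(\<forall>j\<le>n. t j \<in> X i) \<or> (\<forall>j\<le>n. t j \<notin> X i)"
    unfolding inK_def by blast
  have "wedge n (A_fun n X \<sigma>) t = 0" if s: "\<sigma> permutes {1..n}" for \<sigma>
  proof -
    define p where "p = Hilbert_Choice.inv \<sigma> i"
    have p1: "p \<in> {1..n}" using i s unfolding p_def by (metis permutes_in_image permutes_inv)
    have p: "p \<in> {1..n}" "\<sigma> p = i" using p1 s by (auto simp: p_def permutes_inverses(1))
    from c show ?thesis
    proof
      assume "\<forall>j\<le>n. t j \<in> X i"
      then show ?thesis using p
        by (intro wedge_zero_col[of p]) (auto simp: A_fun_def ind_def)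
    next
      assume a: "\<forall>j\<le>n. t j \<notin> X i"
      show ?thesis
      proof (rule wedge_zero_col[of 0])
        show "\<forall>j\<le>n. A_fun n X \<sigma> 0 (t j) = 0"
        proof (intro allI impI)
          fix j assume "j \<le> n"
          then have "ind (X (\<sigma> p)) (t j) = 0" using a p by (simp add: ind_def)
          then have "(\<Prod>m\<in>{1..n}. ind (X (\<sigma> m)) (t j)) = 0" using p
            by (intro prod_zero) auto
          then show "A_fun n X \<sigma> 0 (t j) = 0" by (simp add: A_fun_def)
        qed
      qed simp
    qed
  qed
  then show ?thesis by (simp add: th2_def)
qed

lemma depk_wedge: "depk k (wedge k f)"
  unfolding depk_def wedge_def by (auto intro!: sum.cong prod.cong)

lemma depk_th1: "depk n (th1 n X)"
  unfolding th1_def by (rule depk_wedge)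

lemma depk_th2: "depk n (th2 n X)"
  using depk_wedge unfolding depk_def th2_def by (metis (no_types, lifting) sum.cong)




definition Xv :: "nat \<Rightarrow> nat set set" where "Xv i = {v. i \<in> v}"

lemma relK_inK: "relK n k t = inK n Xv k t"
  by (simp add: relK_def inK_def Xv_def)

definition fb :: "nat \<Rightarrow> (nat \<Rightarrow> nat set) \<Rightarrow> nat \<Rightarrow> nat" where
  "fb n t k = (if k \<in> {1..n} then (SOME a. a \<in> {1..n} \<and> a \<notin> t k \<and> t (k - 1) = insert a (t k)) else k)"

lemma fb_prop:
  assumes "dflag n t" "k \<in> {1..n}"
  shows "fb n t k \<in> {1..n} \<and> fb n t k \<notin> t k \<and> t (k - 1) = insert (fb n t k) (t k)"
proof -
  have "k - 1 < n" "Suc (k - 1) = k" using assms(2) by auto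
  then have "\<exists>a. a \<in> {1..n} \<and> a \<notin> t k \<and> t (k - 1) = insert a (t k)"
    using assms(1) unfolding dflag_def by metis
  then show ?thesis unfolding fb_def using assms(2) by (simp del: atLeastAtMost_iff) (rule someI_ex)
qed

lemma fb_img_aux: "dflag n t \<Longrightarrow> d \<le> n \<Longrightarrow> t (n - d) = fb n t ` {Suc (n - d)..n}"
proof (induction d)
  case 0 then show ?case by (simp add: dflag_def)
next
  case (Suc d)
  define j where "j = n - Suc d"
  have j: "j < n" "Suc j = n - d" using Suc.prems by (auto simp: j_def)
  have sj: "Suc j \<in> {1..n}" using j(1) by simp
  have "t j = insert (fb n t (Suc j)) (t (Suc j))"
    using conjunct2[OF conjunct2[OF fb_prop[OF Suc.prems(1) sj]]] by simp
  also have "t (Suc j) = fb n t ` {Suc (Suc j)..n}"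
  proof -
    have "d \<le> n" using Suc.prems(2) by simp
    then have "t (n - d) = fb n t ` {Suc (n - d)..n}" using Suc.IH Suc.prems(1) by blast
    then show ?thesis by (simp only: j(2))
  qed
  also have "insert (fb n t (Suc j)) (fb n t ` {Suc (Suc j)..n}) = fb n t ` {Suc j..n}"
  proof -
    have "{Suc j..n} = insert (Suc j) {Suc (Suc j)..n}" using j(1) by auto
    then show ?thesis by simp
  qed
  finally show ?case by (simp add: j_def)
qed

lemma fb_img: "dflag n t \<Longrightarrow> j \<le> n \<Longrightarrow> t j = fb n t ` {Suc j..n}"
  using fb_img_aux[of n t "n - j"] by simp

lemma fb_inj: assumes "dflag n t" shows "inj_on (fb n t) {1..n}"
proof (rule inj_onI)
  have ne: "fb n t k \<noteq> fb n t k'" if "k < k'" "k \<in> {1..n}" "k' \<in> {1..n}" for k k'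
  proof -
    have "fb n t k' \<in> t k" using fb_img[OF assms, of k] that by auto
    moreover have "fb n t k \<notin> t k" using fb_prop[OF assms that(2)] by blast
    ultimately show ?thesis by auto
  qed
  fix k k' assume "k \<in> {1..n}" "k' \<in> {1..n}" "fb n t k = fb n t k'"
  note a = this(3)
  show "k = k'"
  proof (rule ccontr)
    assume "k \<noteq> k'"
    then have "k < k' \<or> k' < k" by arith
    then show False using ne[of k k'] ne[of k' k] a \<open>k \<in> {1..n}\<close> \<open>k' \<in> {1..n}\<close> by auto
  qed
qed

lemma fb_perm: assumes "dflag n t" shows "fb n t permutes {1..n}"
proof (rule bij_imp_permutes)
  have "fb n t ` {1..n} \<subseteq> {1..n}" using fb_prop[OF assms] by auto
  then have "fb n t ` {1..n} = {1..n}" by (rule endo_inj_surj[OF finite_atLeastAtMost _ fb_inj[OF assms]])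
  then show "bij_betw (fb n t) {1..n} {1..n}" using fb_inj[OF assms] by (simp add: bij_betw_def)
next
  fix x assume "x \<notin> {1..n}" then show "fb n t x = x" unfolding fb_def by (rule if_not_P)
qed

definition shf :: "nat \<Rightarrow> nat \<Rightarrow> nat" where
  "shf n j = (if j < n then Suc j else if j = n then 0 else j)"

lemma shf_Suc: "shf (Suc n) = shf n \<circ> Transposition.transpose n (Suc n)"
proof
  fix x
  consider "x < n" | "x = n" | "x = Suc n" | "Suc n < x" by linarith
  then show "shf (Suc n) x = (shf n \<circ> Transposition.transpose n (Suc n)) x"
    by cases (auto simp: shf_def transpose_apply_other)
qed

lemma shf_0: "shf 0 = id" by (auto simp: shf_def fun_eq_iff id_def)

lemma shf_perm: "shf n permutes {..n}"
proof (induction n)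
  case 0 then show ?case unfolding shf_0 by (rule permutes_id)
next
  case (Suc n)
  have "Transposition.transpose n (Suc n) permutes {..Suc n}" by (rule permutes_swap_id) auto
  moreover have "shf n permutes {..Suc n}" using Suc by (rule permutes_subset) auto
  ultimately show ?case unfolding shf_Suc by (rule permutes_compose)
qed

lemma shf_sign: "sign (shf n) = (-1)^n"
proof (induction n)
  case 0 then show ?case by (simp add: shf_0 sign_id)
next
  case (Suc n)
  have "permutation (shf n)" using shf_perm permutation_permutes by blast
  then show ?case unfolding shf_Suc sign_compose[OF \<open>permutation (shf n)\<close> permutation_swap_id]
    by (simp add: sign_swap_id Suc)
qed

lemma sum_unique:
  assumes "finite S" "a \<in> S" "\<And>x. x \<in> S \<Longrightarrow> x \<noteq> a \<Longrightarrow> f x = 0"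
  shows "sum f S = f a"
proof -
  have "sum f S = f a + sum f (S - {a})" using assms(1,2) by (rule sum.remove)
  also have "sum f (S - {a}) = 0" using assms(3) by (intro sum.neutral) auto
  finally show ?thesis by simp
qed

lemma perm_ge_id:
  fixes \<rho> :: "nat \<Rightarrow> nat"
  assumes p: "\<rho> permutes {..n}" and ge: "\<forall>j\<le>n. j \<le> \<rho> j" and j: "j \<le> n"
  shows "\<rho> j = j"
proof (rule ccontr)
  assume "\<rho> j \<noteq> j"
  moreover have "j \<le> \<rho> j" using ge j by blast
  ultimately have "j < \<rho> j" by linarith
  then have "(\<Sum>i\<le>n. i) < (\<Sum>i\<le>n. \<rho> i)"
    using ge j by (intro sum_strict_mono_ex1) auto
  moreover have "(\<Sum>i\<le>n. i) = (\<Sum>i\<le>n. \<rho> i)"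
    using sum.permute[OF p, of "\<lambda>i. i"] by (simp only: comp_def)
  ultimately show False by simp
qed

lemma perm_eq_outside: "p permutes S \<Longrightarrow> q permutes S \<Longrightarrow> (\<forall>x\<in>S. p x = q x) \<Longrightarrow> p = q"
proof
  fix x assume p: "p permutes S" and q: "q permutes S" and e: "\<forall>x\<in>S. p x = q x"
  show "p x = q x"
  proof (cases "x \<in> S")
    case True then show ?thesis using e by blast
  next
    case False then show ?thesis using permutes_not_in[OF p False] permutes_not_in[OF q False] by simp
  qed
qed


lemma th1_flag:
  assumes fl: "dflag n t"
  shows "th1 n Xv t = of_int (sign (fb n t)) * (-1)^n"
proof -
  define b where "b = fb n t"
  define g where "g = b \<circ> shf n"
  have bp: "b permutes {1..n}" using fb_perm[OF fl] by (simp add: b_def)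
  have bp': "b permutes {..n}" using bp by (rule permutes_subset) auto
  have gp: "g permutes {..n}" unfolding g_def using shf_perm bp' by (rule permutes_compose)
  have b0: "b 0 = 0" using permutes_not_in[OF bp] by simp
  have gj: "g j = b (Suc j)" if "j < n" for j using that by (simp add: g_def shf_def)
  have gn: "g n = 0" by (simp add: g_def shf_def b0)
  have tj: "t j = b ` {Suc j..n}" if "j \<le> n" for j using fb_img[OF fl that] by (simp add: b_def)
  define f :: "nat \<Rightarrow> nat set \<Rightarrow> complex" where "f = (\<lambda>i. if i = 0 then (\<lambda>_. 1) else ind (Xv i))"
  have fval: "f i v = (if i = 0 \<or> i \<in> v then 1 else 0)" for i v
    by (simp add: f_def ind_def Xv_def indicator_def)
  have uniq: "\<pi> = g" if pp: "\<pi> permutes {..n}" and nz: "(\<Prod>j\<le>n. f (\<pi> j) (t j)) \<noteq> 0" for \<pi>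
  proof -
    have nz': "\<pi> j = 0 \<or> \<pi> j \<in> t j" if "j \<le> n" for j
    proof -
      have "f (\<pi> j) (t j) \<noteq> 0" using nz that by (auto simp: prod_zero_iff)
      then show ?thesis by (simp add: fval split: if_splits)
    qed
    have inimg: "\<exists>m. j \<le> m \<and> m \<le> n \<and> \<pi> j = g m" if "j \<le> n" for j
    proof (cases "\<pi> j = 0")
      case True then show ?thesis using that gn by (intro exI[of _ n]) auto
    next
      case False
      then have "\<pi> j \<in> b ` {Suc j..n}" using nz'[OF that] tj[OF that] by auto
      then obtain m where m: "m \<in> {Suc j..n}" "\<pi> j = b m" by auto
      then have "g (m - 1) = b m" using gj[of "m - 1"] by auto
      then show ?thesis using m by (intro exI[of _ "m - 1"]) auto
    qed
    define \<rho> where "\<rho> = Hilbert_Choice.inv g \<circ> \<pi>"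
    have rp: "\<rho> permutes {..n}" unfolding \<rho>_def using pp permutes_inv[OF gp] by (rule permutes_compose)
    have "\<forall>j\<le>n. j \<le> \<rho> j"
    proof (intro allI impI)
      fix j assume "j \<le> n"
      then obtain m where "j \<le> m" "\<pi> j = g m" using inimg by blast
      then show "j \<le> \<rho> j" using permutes_inverses(2)[OF gp] by (simp add: \<rho>_def)
    qed
    then have r: "\<rho> j = j" if "j \<le> n" for j using perm_ge_id[OF rp] that by blast
    have "\<pi> j = g j" if "j \<le> n" for j
    proof -
      have "\<pi> j = g (Hilbert_Choice.inv g (\<pi> j))" using permutes_inverses(1)[OF gp] by simp
      also have "Hilbert_Choice.inv g (\<pi> j) = \<rho> j" by (simp add: \<rho>_def)
      finally show ?thesis using r[OF that] by simp
    qed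
    then show "\<pi> = g" using perm_eq_outside[OF pp gp] by auto
  qed
  have val: "(\<Prod>j\<le>n. f (g j) (t j)) = 1"
  proof (intro prod.neutral ballI)
    fix j assume "j \<in> {..n}"
    then have j: "j \<le> n" by simp
    show "f (g j) (t j) = 1"
    proof (cases "j < n")
      case True
      then have "g j \<in> t j" using gj tj[OF j] by auto
      then show ?thesis by (simp add: fval)
    next
      case False then have "j = n" using j by simp
      then show ?thesis using gn by (simp add: fval)
    qed
  qed
  have "th1 n Xv t = (\<Sum>\<pi>\<in>{\<pi>. \<pi> permutes {..n}}. of_int (sign \<pi>) * (\<Prod>j\<le>n. f (\<pi> j) (t j)))"
    by (simp add: th1_def wedge_def f_def)
  also have "\<dots> = of_int (sign g) * (\<Prod>j\<le>n. f (g j) (t j))"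
  proof (rule sum_unique)
    show "finite {\<pi>. \<pi> permutes {..n}}" by (simp add: finite_permutations)
    show "g \<in> {\<pi>. \<pi> permutes {..n}}" using gp by simp
    fix x assume "x \<in> {\<pi>. \<pi> permutes {..n}}" "x \<noteq> g"
    then show "of_int (sign x) * (\<Prod>j\<le>n. f (x j) (t j)) = 0" using uniq by auto
  qed
  also have "\<dots> = of_int (sign g)" by (simp add: val)
  also have "sign g = sign b * (-1)^n"
  proof -
    have "permutation b" using bp permutation_permutes by blast
    moreover have "permutation (shf n)" using shf_perm permutation_permutes by blast
    ultimately show ?thesis unfolding g_def by (simp add: sign_compose shf_sign)
  qed
  finally show ?thesis by (simp add: b_def)
qed

lemma Anz:
  assumes "A_fun n Xv \<sigma> k v \<noteq> 0"
  shows "(\<forall>m\<in>{Suc k..n}. \<sigma> m \<in> v) \<and> (k \<noteq> 0 \<longrightarrow> \<sigma> k \<notin> v)"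
proof -
  have a: "(if k = 0 then 1 else ind (- Xv (\<sigma> k)) v) \<noteq> 0" and
       b: "(\<Prod>j\<in>{Suc k..n}. ind (Xv (\<sigma> j)) v) \<noteq> 0"
    using assms by (auto simp: A_fun_def)
  from b have "\<forall>m\<in>{Suc k..n}. ind (Xv (\<sigma> m)) v \<noteq> 0" by (auto simp: prod_zero_iff)
  then have "\<forall>m\<in>{Suc k..n}. \<sigma> m \<in> v" by (auto simp: ind_def Xv_def indicator_def)
  moreover from a have "k \<noteq> 0 \<longrightarrow> \<sigma> k \<notin> v" by (auto simp: ind_def Xv_def indicator_def split: if_splits)
  ultimately show ?thesis by blast
qed

lemma card_img_ivl: "\<sigma> permutes S \<Longrightarrow> card (\<sigma> ` {Suc k..n}) = n - k"
  by (simp add: card_image permutes_inj_on)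

lemma th2_key:
  assumes fl: "dflag n t" and sp: "\<sigma> permutes {1..n}" and pp: "\<pi> permutes {..n}"
    and nz: "(\<Prod>j\<le>n. A_fun n Xv \<sigma> (\<pi> j) (t j)) \<noteq> 0"
  shows "\<pi> = id \<and> \<sigma> = fb n t"
proof -
  define b where "b = fb n t"
  have bp: "b permutes {1..n}" using fb_perm[OF fl] by (simp add: b_def)
  have tj: "t j = b ` {Suc j..n}" if "j \<le> n" for j using fb_img[OF fl that] by (simp add: b_def)
  have nzj: "A_fun n Xv \<sigma> (\<pi> j) (t j) \<noteq> 0" if "j \<le> n" for j using nz that by (auto simp: prod_zero_iff)
  have sub: "\<sigma> ` {Suc (\<pi> j)..n} \<subseteq> t j" if "j \<le> n" for j using Anz[OF nzj[OF that]] by auto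
  have pjn: "\<pi> j \<le> n" if "j \<le> n" for j using perm_le[OF pp that] .
  have ge: "\<forall>j\<le>n. j \<le> \<pi> j"
  proof (intro allI impI)
    fix j assume j: "j \<le> n"
    have "card (\<sigma> ` {Suc (\<pi> j)..n}) \<le> card (t j)" using sub[OF j] tj[OF j] by (intro card_mono) auto
    then have "n - \<pi> j \<le> n - j" using card_img_ivl[OF sp] card_img_ivl[OF bp] tj[OF j] by simp
    then show "j \<le> \<pi> j" using j pjn[OF j] by linarith
  qed
  have pid: "\<pi> j = j" if "j \<le> n" for j using perm_ge_id[OF pp ge that] .
  have pi_id: "\<pi> = id" using perm_eq_outside[OF pp permutes_id] pid by auto
  have imgeq: "\<sigma> ` {Suc j..n} = b ` {Suc j..n}" if "j \<le> n" for j
  proof (rule card_subset_eq)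
    show "finite (b ` {Suc j..n})" by simp
    show "\<sigma> ` {Suc j..n} \<subseteq> b ` {Suc j..n}" using sub[OF that] tj[OF that] pid[OF that] by simp
    show "card (\<sigma> ` {Suc j..n}) = card (b ` {Suc j..n})" using card_img_ivl[OF sp] card_img_ivl[OF bp] by simp
  qed
  have "\<sigma> k = b k" if k: "k \<in> {1..n}" for k
  proof -
    have km: "Suc (k - 1) = k" "k - 1 \<le> n" using k by auto
    have "\<sigma> k \<in> \<sigma> ` {k..n}" using k by auto
    also have "\<sigma> ` {k..n} = b ` {k..n}" using imgeq[OF km(2)] km(1) by simp
    also have "{k..n} = insert k {Suc k..n}" using k by auto
    finally have "\<sigma> k \<in> insert (b k) (b ` {Suc k..n})" by simp
    moreover have "\<sigma> k \<notin> t k" using Anz[OF nzj[of k]] k pid[of k] by auto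
    ultimately show ?thesis using tj[of k] k by auto
  qed
  then have "\<sigma> = b" using perm_eq_outside[OF sp bp] by auto
  then show ?thesis using pi_id by (simp add: b_def)
qed

lemma th2_val:
  assumes fl: "dflag n t"
  shows "(\<Prod>j\<le>n. A_fun n Xv (fb n t) j (t j)) = 1"
proof (intro prod.neutral ballI)
  define b where "b = fb n t"
  have tj: "t j = b ` {Suc j..n}" if "j \<le> n" for j using fb_img[OF fl that] by (simp add: b_def)
  fix j assume "j \<in> {..n}"
  then have j: "j \<le> n" by simp
  have P: "(\<Prod>m\<in>{Suc j..n}. ind (Xv (b m)) (t j)) = 1"
    using tj[OF j] by (intro prod.neutral) (auto simp: ind_def Xv_def)
  show "A_fun n Xv (fb n t) j (t j) = 1"
  proof (cases "j = 0")
    case True then show ?thesis using P by (simp add: A_fun_def b_def)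
  next
    case False
    then have "b j \<notin> t j" using fb_prop[OF fl, of j] j by (auto simp: b_def)
    then have "ind (- Xv (b j)) (t j) = 1" by (simp add: ind_def Xv_def)
    then show ?thesis using P False by (simp add: A_fun_def b_def)
  qed
qed

lemma wedge_unique:
  assumes "p0 permutes {..k}" "\<And>p. p permutes {..k} \<Longrightarrow> p \<noteq> p0 \<Longrightarrow> (\<Prod>j\<le>k. f (p j) (x j)) = 0"
  shows "wedge k f x = of_int (sign p0) * (\<Prod>j\<le>k. f (p0 j) (x j))"
  unfolding wedge_def by (rule sum_unique) (use assms in \<open>auto simp: finite_permutations\<close>)

lemma th2_flag:
  assumes fl: "dflag n t"
  shows "th2 n Xv t = (-1)^n * of_int (sign (fb n t))"
proof -
  define b where "b = fb n t"
  have bp: "b permutes {1..n}" using fb_perm[OF fl] by (simp add: b_def)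
  have w: "wedge n (A_fun n Xv \<sigma>) t = (if \<sigma> = b then 1 else 0)" if sp: "\<sigma> permutes {1..n}" for \<sigma>
  proof -
    have "wedge n (A_fun n Xv \<sigma>) t = of_int (sign (id :: nat \<Rightarrow> nat)) * (\<Prod>j\<le>n. A_fun n Xv \<sigma> (id j) (t j))"
    proof (rule wedge_unique[OF permutes_id])
      fix x assume "x permutes {..n}" "x \<noteq> id"
      then show "(\<Prod>j\<le>n. A_fun n Xv \<sigma> (x j) (t j)) = 0"
        using th2_key[OF fl sp, of x] by auto
    qed
    also have "\<dots> = (\<Prod>j\<le>n. A_fun n Xv \<sigma> j (t j))" by (simp add: sign_id)
    also have "\<dots> = (if \<sigma> = b then 1 else 0)"
    proof (cases "\<sigma> = b")
      case True then show ?thesis using th2_val[OF fl] by (simp add: b_def)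
    next
      case False
      then have "(\<Prod>j\<le>n. A_fun n Xv \<sigma> (id j) (t j)) = 0"
        using th2_key[OF fl sp permutes_id] by (auto simp: b_def)
      then show ?thesis using False by simp
    qed
    finally show ?thesis .
  qed
  have "th2 n Xv t = (-1)^n * (\<Sum>\<sigma>\<in>{\<sigma>. \<sigma> permutes {1..n}}. of_int (sign \<sigma>) * (if \<sigma> = b then 1 else 0))"
    by (simp add: th2_def w)
  also have "(\<Sum>\<sigma>\<in>{\<sigma>. \<sigma> permutes {1..n}}. of_int (sign \<sigma>) * (if \<sigma> = b then 1 else 0)) = (of_int (sign b) :: complex)"
    using bp by (simp add: finite_permutations if_distrib cong: if_cong)
  finally show ?thesis by (simp add: b_def)
qed

lemma th_flag: "dflag n t \<Longrightarrow> th1 n Xv t = th2 n Xv t"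
  by (simp add: th1_flag th2_flag mult.commute)




definition cpat :: "nat \<Rightarrow> (nat \<Rightarrow> 'a set) \<Rightarrow> 'a \<Rightarrow> nat set" where
  "cpat n X y = {i \<in> {1..n}. y \<in> X i}"

definition pat :: "nat \<Rightarrow> (nat \<Rightarrow> 'a set) \<Rightarrow> nat \<Rightarrow> (nat \<Rightarrow> 'a) \<Rightarrow> (nat \<Rightarrow> nat set)" where
  "pat n X k x = (\<lambda>j. if j \<le> k then cpat n X (x j) else {})"

lemma wedge_cong:
  assumes "\<And>i j. i \<le> k \<Longrightarrow> j \<le> k \<Longrightarrow> f i (x j) = g i (y j)"
  shows "wedge k f x = wedge k g y"
  unfolding wedge_def
proof (intro sum.cong refl)
  fix p assume "p \<in> {p. p permutes {..k}}"
  then have p: "p permutes {..k}" by simp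
  have "(\<Prod>j\<le>k. f (p j) (x j)) = (\<Prod>j\<le>k. g (p j) (y j))"
    by (intro prod.cong refl) (simp add: assms perm_le[OF p])
  then show "of_int (sign p) * (\<Prod>j\<le>k. f (p j) (x j)) = of_int (sign p) * (\<Prod>j\<le>k. g (p j) (y j))"
    by simp
qed

lemma th1_pat: "th1 n X x = th1 n Xv (pat n X n x)"
  unfolding th1_def by (rule wedge_cong) (auto simp: ind_def Xv_def pat_def cpat_def indicator_def)

lemma th2_pat: "th2 n X x = th2 n Xv (pat n X n x)"
  unfolding th2_def
proof (intro arg_cong2[where f="(*)"] refl sum.cong)
  fix \<sigma> assume "\<sigma> \<in> {\<sigma>. \<sigma> permutes {1..n}}"
  then have s: "\<sigma> permutes {1..n}" by simp
  have si: "\<sigma> m \<in> {1..n}" if "m \<in> {1..n}" for m using permutes_in_image[OF s, of m] that by blast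
  have Aeq: "A_fun n X \<sigma> i (x j) = A_fun n Xv \<sigma> i (pat n X n x j)" if i: "i \<le> n" and j: "j \<le> n" for i j
  proof -
    have e: "ind (X (\<sigma> m)) (x j) = ind (Xv (\<sigma> m)) (pat n X n x j)" if "m \<in> {1..n}" for m
      using si[OF that] j by (simp add: ind_def Xv_def pat_def cpat_def indicator_def)
    have e2: "ind (- X (\<sigma> m)) (x j) = ind (- Xv (\<sigma> m)) (pat n X n x j)" if "m \<in> {1..n}" for m
      using e[OF that] by (simp add: ind_compl)
    have p: "(\<Prod>m\<in>{i+1..n}. ind (X (\<sigma> m)) (x j)) = (\<Prod>m\<in>{i+1..n}. ind (Xv (\<sigma> m)) (pat n X n x j))"
      by (intro prod.cong refl e) auto
    show ?thesis
    proof (cases "i = 0")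
      case True then show ?thesis using p by (simp add: A_fun_def)
    next
      case False then have "i \<in> {1..n}" using i by auto
      then show ?thesis using p e2 by (simp add: A_fun_def)
    qed
  qed
  show "wedge n (A_fun n X \<sigma>) x = wedge n (A_fun n Xv \<sigma>) (pat n X n x)"
    by (rule wedge_cong) (rule Aeq)
qed

lemma pat_omit: "i \<le> Suc k \<Longrightarrow> pat n X k (omit k i x) = del i (pat n X (Suc k) x)"
  by (auto simp: pat_def omit_def del_def fun_eq_iff)

lemma cobound_pat: "cobound k (\<lambda>x. \<Phi> (pat n X k x)) x = cb k \<Phi> (pat n X (Suc k) x)"
  unfolding cobound_def cb_def by (intro sum.cong refl) (simp add: pat_omit)


lemma CX_pat:
  fixes X :: "nat \<Rightarrow> 'a::metric_space set" and \<Phi> :: "(nat \<Rightarrow> nat set) \<Rightarrow> complex"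
  assumes ct: "coarsely_transverse n X" and van: "\<And>t. relK n k t \<Longrightarrow> \<Phi> t = 0"
  shows "(\<lambda>x. \<Phi> (pat n X k x)) \<in> CX k"
proof -
  have Xb: "X i \<in> sets borel" if "i \<in> {1..n}" for i using ct that by (simp add: coarsely_transverse_def)
  define P where "P = {s::nat \<Rightarrow> nat set. \<forall>j. (j \<in> {..k} \<longrightarrow> s j \<in> Pow {1..n}) \<and> (j \<notin> {..k} \<longrightarrow> s j = {})}"
  have finP: "finite P" unfolding P_def by (rule finite_set_of_finite_funs) auto
  have patP: "pat n X k x \<in> P" for x by (auto simp: P_def pat_def cpat_def)
  define chi where "chi s x = (\<Prod>j\<le>k. \<Prod>i\<in>{1..n}. if i \<in> s j then ind (X i) (x j) else 1 - ind (X i) (x j))"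
    for s and x :: "nat \<Rightarrow> 'a"
  have chi_eq: "chi s x = (if pat n X k x = s then 1 else 0)" if sP: "s \<in> P" for s x
  proof (cases "pat n X k x = s")
    case True
    have "chi s x = 1" unfolding chi_def
    proof (intro prod.neutral ballI)
      fix j i assume j: "j \<in> {..k}" and i: "i \<in> {1..n}"
      have "s j = cpat n X (x j)" using True j by (auto simp: pat_def)
      then show "(if i \<in> s j then ind (X i) (x j) else 1 - ind (X i) (x j)) = 1"
        using i by (auto simp: cpat_def ind_def)
    qed
    then show ?thesis using True by simp
  next
    case False
    then obtain j where j: "pat n X k x j \<noteq> s j" by (meson ext)
    then have jk: "j \<le> k" using sP by (auto simp: pat_def P_def split: if_splits)
    then have ne: "cpat n X (x j) \<noteq> s j" using j by (simp add: pat_def)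
    have sj: "s j \<subseteq> {1..n}" using sP jk by (auto simp: P_def)
    obtain i where i: "i \<in> {1..n}" "(i \<in> s j) \<noteq> (x j \<in> X i)"
    proof -
      have "\<exists>i\<in>{1..n}. (i \<in> s j) \<noteq> (x j \<in> X i)"
      proof (rule ccontr)
        assume "\<not> ?thesis"
        then have "cpat n X (x j) = s j" using sj by (auto simp: cpat_def)
        with ne show False by simp
      qed
      then show ?thesis using that by blast
    qed
    have "chi s x = 0" unfolding chi_def
    proof (rule prod_zero)
      show "finite {..k}" by simp
      have "(\<Prod>i\<in>{1..n}. if i \<in> s j then ind (X i) (x j) else 1 - ind (X i) (x j)) = 0"
        using i by (intro prod_zero) (auto intro!: bexI[of _ i] simp: ind_def)
      then show "\<exists>j'\<in>{..k}. (\<Prod>i\<in>{1..n}. if i \<in> s j' then ind (X i) (x j') else 1 - ind (X i) (x j')) = 0"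
        using jk by blast
    qed
    then show ?thesis using False by simp
  qed
  have rep: "\<Phi> (pat n X k x) = (\<Sum>s\<in>P. \<Phi> s * chi s x)" for x
  proof -
    have "(\<Sum>s\<in>P. \<Phi> s * chi s x) = \<Phi> (pat n X k x) * chi (pat n X k x) x"
      by (rule sum_unique[OF finP patP]) (simp add: chi_eq)
    then show ?thesis by (simp add: chi_eq patP)
  qed
  let ?M = "PiM {..k} (\<lambda>_. borel :: 'a measure)"
  have m1: "(\<lambda>x. ind (X i) (x j)) \<in> borel_measurable ?M" if "i \<in> {1..n}" "j \<in> {..k}" for i j
    unfolding ind_def
    by (rule measurable_compose[OF measurable_component_singleton[OF that(2)] borel_measurable_indicator])
       (simp add: Xb[OF that(1)])
  have m2: "(\<lambda>x. if i \<in> s j then ind (X i) (x j) else 1 - ind (X i) (x j)) \<in> borel_measurable ?M"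
    if "i \<in> {1..n}" "j \<in> {..k}" for i j s
  proof (cases "i \<in> s j")
    case True then show ?thesis using m1[OF that] by simp
  next
    case False then show ?thesis using borel_measurable_diff[OF borel_measurable_const m1[OF that]] by simp
  qed
  have mchi: "chi s \<in> borel_measurable ?M" for s
    unfolding chi_def by (intro borel_measurable_prod m2) auto
  have meas: "(\<lambda>x. \<Phi> (pat n X k x)) \<in> borel_measurable ?M"
    unfolding rep by (intro borel_measurable_sum borel_measurable_times borel_measurable_const mchi)
  have bnd: "norm (\<Phi> (pat n X k x)) \<le> (\<Sum>s\<in>P. norm (\<Phi> s))" for x
    using member_le_sum[of "pat n X k x" P "\<lambda>s. norm (\<Phi> s)"] patP finP by auto
  have supp: "bounded_tuples k (supp_cochain k (\<lambda>x. \<Phi> (pat n X k x)) \<inter> diag_thick k R)" if R: "R > 0" for R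
  proof -
    define C where "C = (\<Inter>i\<in>{1..n}. thick (R+1) (X i) \<inter> thick (R+1) (- X i))"
    have "bounded C" using ct R unfolding C_def coarsely_transverse_def by auto
    then obtain z0 B where zB: "\<forall>z\<in>C. dist z0 z \<le> B" unfolding bounded_def by auto
    show ?thesis unfolding bounded_tuples_def
    proof (intro exI[of _ z0] exI[of _ "B + (R + 1)"] ballI allI impI)
      fix x j assume x: "x \<in> supp_cochain k (\<lambda>x. \<Phi> (pat n X k x)) \<inter> diag_thick k R" and j: "j \<le> k"
      have nz: "\<Phi> (pat n X k x) \<noteq> 0" using x by (auto simp: supp_cochain_def)
      then have nr: "\<not> relK n k (pat n X k x)" using van by blast
      have dd: "diag_dist k x \<le> R" using x by (auto simp: diag_thick_def)
      have bdd: "bdd_below (range (\<lambda>z. Max ((\<lambda>i. dist (x i) z) ` {..k})))"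
      proof (rule bdd_belowI2[of _ 0])
        fix z
        have "dist (x 0) z \<le> Max ((\<lambda>i. dist (x i) z) ` {..k})" by (rule Max_ge) auto
        then show "0 \<le> Max ((\<lambda>i. dist (x i) z) ` {..k})" using zero_le_dist[of "x 0" z] by linarith
      qed
      have "diag_dist k x < R + 1" using dd by simp
      then obtain z where z: "Max ((\<lambda>i. dist (x i) z) ` {..k}) < R + 1"
        unfolding diag_dist_def using cINF_less_iff[OF _ bdd] by auto
      have dz: "dist (x l) z < R + 1" if "l \<le> k" for l
      proof -
        have "dist (x l) z \<le> Max ((\<lambda>i. dist (x i) z) ` {..k})" by (rule Max_ge) (use that in auto)
        then show ?thesis using z by linarith
      qed
      have "z \<in> C" unfolding C_def
      proof (intro INT_I IntI)
        fix i assume i: "i \<in> {1..n}"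
        from nr i obtain j1 j2 where j1: "j1 \<le> k" "i \<in> pat n X k x j1" and j2: "j2 \<le> k" "i \<notin> pat n X k x j2"
          unfolding relK_def by blast
        have x1: "x j1 \<in> X i" using j1 by (simp add: pat_def cpat_def)
        have x2: "x j2 \<in> - X i" using j2 i by (simp add: pat_def cpat_def)
        show "z \<in> thick (R+1) (X i)" unfolding thick_def
          using x1 infdist_le[OF x1, of z] dz[OF j1(1)] by (auto simp: dist_commute)
        show "z \<in> thick (R+1) (- X i)" unfolding thick_def
          using x2 infdist_le[OF x2, of z] dz[OF j2(1)] by (auto simp: dist_commute)
      qed
      then have "dist z0 z \<le> B" using zB by blast
      moreover have "dist z (x j) \<le> R + 1" using dz[OF j] by (simp add: dist_commute)
      ultimately show "dist z0 (x j) \<le> B + (R + 1)" using dist_triangle[of z0 "x j" z] by linarith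
    qed
  qed
  have "\<forall>S. S \<subseteq> tuples k \<longrightarrow> bounded_tuples k S \<longrightarrow> (\<exists>K. \<forall>x\<in>S. norm (\<Phi> (pat n X k x)) \<le> K)"
    using bnd by blast
  then show ?thesis unfolding CX_def using meas supp by blast
qed


lemma th_cocycle_M:
  fixes X :: "nat \<Rightarrow> 'a::metric_space set"
  assumes ct: "coarsely_transverse n X"
  shows "coarse_cocycle n (th1 n X)" and "coarse_cocycle n (th2 n X)"
proof -
  have e1: "th1 n X = (\<lambda>x. th1 n Xv (pat n X n x))" by (rule ext) (rule th1_pat)
  have e2: "th2 n X = (\<lambda>x. th2 n Xv (pat n X n x))" by (rule ext) (rule th2_pat)
  have v1: "\<And>t. relK n n t \<Longrightarrow> th1 n Xv t = 0" by (rule th1_vanish) (simp add: relK_inK)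
  have v2: "\<And>t. relK n n t \<Longrightarrow> th2 n Xv t = 0" by (rule th2_vanish) (simp add: relK_inK)
  show "coarse_cocycle n (th1 n X)" unfolding coarse_cocycle_def e1
    using CX_pat[of n X n "th1 n Xv", OF ct v1] cobound_pat[of n "th1 n Xv" n X] th1_cocycle[of n Xv] by simp
  show "coarse_cocycle n (th2 n X)" unfolding coarse_cocycle_def e2
    using CX_pat[of n X n "th2 n Xv", OF ct v2] cobound_pat[of n "th2 n Xv" n X] th2_cocycle[of n Xv] by simp
qed

lemma Omega_props:
  fixes n :: nat
  defines "\<Omega> \<equiv> (\<lambda>t. th1 n Xv t - th2 n Xv t)"
  shows "depk n \<Omega>" and "\<And>t. relK n n t \<Longrightarrow> \<Omega> t = 0" and "\<And>t. cb n \<Omega> t = 0"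
    and "\<And>t. dflag n t \<Longrightarrow> \<Omega> t = 0"
proof -
  show "depk n \<Omega>" using depk_th1[of n Xv] depk_th2[of n Xv] unfolding depk_def \<Omega>_def by metis
  show "\<And>t. relK n n t \<Longrightarrow> \<Omega> t = 0"
    unfolding \<Omega>_def by (simp add: th1_vanish th2_vanish relK_inK)
  show "\<And>t. cb n \<Omega> t = 0" unfolding \<Omega>_def cb_diff by (simp add: th1_cocycle th2_cocycle)
  show "\<And>t. dflag n t \<Longrightarrow> \<Omega> t = 0" unfolding \<Omega>_def by (simp add: th_flag)
qed

theorem proposition5p6:
  fixes X :: "nat \<Rightarrow> 'a::heine_borel set" and n :: nat
  assumes "coarsely_transverse n X"
  shows "HX_eq n
           (wedge n (\<lambda>i. if i = 0 then (\<lambda>_. 1) else ind (X i)))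
           (\<lambda>x. (-1) ^ n * (\<Sum>\<sigma>\<in>{\<sigma>. \<sigma> permutes {1..n}}.
                  of_int (sign \<sigma>) * wedge n (A_fun n X \<sigma>) x))"
proof -
  note ct = assms
  define \<Omega> where "\<Omega> = (\<lambda>t. th1 n Xv t - th2 n Xv t)"
  have O1: "depk n \<Omega>" unfolding \<Omega>_def by (rule Omega_props(1))
  have O2: "\<And>t. relK n n t \<Longrightarrow> \<Omega> t = 0" unfolding \<Omega>_def by (rule Omega_props(2))
  have O3: "\<And>t. cb n \<Omega> t = 0" unfolding \<Omega>_def by (rule Omega_props(3))
  have O4: "\<And>t. dflag n t \<Longrightarrow> \<Omega> t = 0" unfolding \<Omega>_def by (rule Omega_props(4))
  have diff: "th1 n X x - th2 n X x = \<Omega> (pat n X n x)" for x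
    unfolding \<Omega>_def by (simp only: th1_pat[of n X x] th2_pat[of n X x])
  have cc: "coarse_cocycle n (th1 n X)" "coarse_cocycle n (th2 n X)"
    using th_cocycle_M[OF ct] by auto
  have main: "HX_eq n (th1 n X) (th2 n X)"
  proof (cases n)
    case 0
    have z: "\<Omega> s = 0" for s
    proof -
      define t' where "t' = (\<lambda>l. if l = 0 then {} else s (l - 1))"
      have "cb 0 \<Omega> t' = \<Omega> (del 0 t') - \<Omega> (del 1 t')" by (simp add: cb_def)
      moreover have "del 0 t' = s" by (simp add: del_def t'_def)
      moreover have "dflag 0 (del 1 t')" by (simp add: dflag_def del_def t'_def)
      then have "\<Omega> (del 1 t') = 0" using O4 0 by simp
      ultimately show ?thesis using O3[of t'] 0 by simp
    qed
    have "\<forall>x\<in>tuples n. th1 n X x = th2 n X x"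
    proof
      fix x show "th1 n X x = th2 n X x" using diff[of x] z[of "pat n X n x"] by simp
    qed
    then show ?thesis unfolding HX_eq_def using cc 0 by simp
  next
    case (Suc m)
    have D: "depk (Suc m) \<Omega>" using O1 Suc by simp
    have R: "\<forall>t. relK (Suc m) (Suc m) t \<longrightarrow> \<Omega> t = 0" using O2 Suc by simp
    have C: "\<forall>t. cb (Suc m) \<Omega> t = 0" using O3 Suc by simp
    have F: "\<forall>t. dflag (Suc m) t \<longrightarrow> \<Omega> t = 0" using O4 Suc by simp
    have "\<exists>\<Psi>. (\<forall>t. relK (Suc m) m t \<longrightarrow> \<Psi> t = 0) \<and> (\<forall>t. cb m \<Psi> t = \<Omega> t)"
      using spec[OF main_induct[of m], of \<Omega>] D R C F by simp
    then obtain \<Psi> where P1: "\<forall>t. relK (Suc m) m t \<longrightarrow> \<Psi> t = 0" and P2: "\<forall>t. cb m \<Psi> t = \<Omega> t"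
      by blast
    have P1': "\<And>t. relK n m t \<Longrightarrow> \<Psi> t = 0" using P1 Suc by simp
    have cx: "(\<lambda>x. \<Psi> (pat n X m x)) \<in> CX m" by (rule CX_pat[OF ct P1'])
    have eq: "th1 n X x - th2 n X x = cobound m (\<lambda>x. \<Psi> (pat n X m x)) x" for x
    proof -
      have "cobound m (\<lambda>x. \<Psi> (pat n X m x)) x = cb m \<Psi> (pat n X (Suc m) x)" by (rule cobound_pat)
      also have "\<dots> = \<Omega> (pat n X n x)" using P2 Suc by simp
      finally show ?thesis using diff[of x] by simp
    qed
    have "\<exists>\<psi>\<in>CX (n - 1). \<forall>x\<in>tuples n. th1 n X x - th2 n X x = cobound (n - 1) \<psi> x"
      using cx eq Suc by (intro bexI[of _ "\<lambda>x. \<Psi> (pat n X m x)"]) auto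
    then show ?thesis unfolding HX_eq_def using cc Suc by simp
  qed
  show ?thesis using main unfolding th1_def th2_def .
qed


end
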